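(* Let $\mathcal{X}$ be a Banach space and $J:\mathcal{X}\to\mathbb{R}\cup\{\infty\}$ a convex, absolutely one-homogeneous functional. Let $v\in\mathcal{X}$ and $p\in\partial J(v)$, and define $$\mathcal{M}^{\mathrm{B}}=\{u\in\mathcal{X}: D_J^p(u,v)=0\},\qquad \mathcal{M}^{\mathrm{IC}}=\{u\in\mathcal{X}: [D_J^p(\cdot,v)\,\Box\, D_J^{-p}(\cdot,-v)](u)=0\}.$$ Then $\mathcal{M}^{\mathrm{B}}\subset\mathcal{M}^{\mathrm{IC}}$.
   Context: Absolutely one-homogeneous: $J(\lambda u)=|\lambda|J(u)$ for all $\lambda\in\mathbb{R}$. Bregman distance: $D_J^{q}(u,w)=J(u)-J(w)-\langle q,u-w\rangle$ for $q\in\partial J(w)$. Infimal convolution: $(F\Box G)(u)=\inf_{z\in\mathcal{X}}F(u-z)+G(z)$. *)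

theory Defs
  imports "HOL-Analysis.Analysis" "HOL-Library.Extended_Real"
begin

(* Functionals J : X \<rightarrow> \<real> \<union> {\<infinity>} are modelled as ereal-valued functions never taking -\<infinity>. *)

definition convex_functional :: "('a::real_vector \<Rightarrow> ereal) \<Rightarrow> bool" where
  "convex_functional J \<longleftrightarrow>
     (\<forall>x y t. 0 \<le> t \<and> t \<le> 1 \<longrightarrow>
        J ((1 - t) *\<^sub>R x + t *\<^sub>R y) \<le> ereal (1 - t) * J x + ereal t * J y)"

definition abs_one_homogeneous :: "('a::real_vector \<Rightarrow> ereal) \<Rightarrow> bool" where
  "abs_one_homogeneous J \<longleftrightarrow> (\<forall>(c::real) u. J (c *\<^sub>R u) = ereal \<bar>c\<bar> * J u)"

definition subdifferential :: "('a::real_normed_vector \<Rightarrow> ereal) \<Rightarrow> 'a \<Rightarrow> ('a \<Rightarrow>\<^sub>L real) set" where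
  "subdifferential J v =
     {p. J v \<noteq> \<infinity> \<and> (\<forall>u. J v + ereal (blinfun_apply p (u - v)) \<le> J u)}"

definition bregman :: "('a::real_normed_vector \<Rightarrow> ereal) \<Rightarrow> ('a \<Rightarrow>\<^sub>L real) \<Rightarrow> 'a \<Rightarrow> 'a \<Rightarrow> ereal" where
  "bregman J q u w = J u - J w - ereal (blinfun_apply q (u - w))"

definition inf_conv :: "('a::ab_group_add \<Rightarrow> ereal) \<Rightarrow> ('a \<Rightarrow> ereal) \<Rightarrow> 'a \<Rightarrow> ereal" where
  "inf_conv F G u = (INF z. F (u - z) + G z)"

end

theory Submission
  imports Defs
begin

theorem lemma1:
  fixes J :: "'a::banach \<Rightarrow> ereal" and v :: 'a and p :: "'a \<Rightarrow>\<^sub>L real"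
  assumes "\<forall>u. J u \<noteq> -\<infinity>"
    and "convex_functional J"
    and "abs_one_homogeneous J"
    and "p \<in> subdifferential J v"
  shows "{u. bregman J p u v = 0}
           \<subseteq> {u. inf_conv (\<lambda>x. bregman J p x v) (\<lambda>x. bregman J (- p) x (- v)) u = 0}"
proof
  fix u assume "u \<in> {u. bregman J p u v = 0}"
  hence u0: "bregman J p u v = 0" by simp
  have fin: "J v \<noteq> \<infinity>" and sub: "\<And>w. J v + ereal (p (w - v)) \<le> J w"
    using assms(4) unfolding subdifferential_def by auto
  obtain a where a: "J v = ereal a" using fin assms(1) by (cases "J v") auto
  have hom: "\<And>c w. J (c *\<^sub>R w) = ereal \<bar>c\<bar> * J w" using assms(3) abs_one_homogeneous_def by blast
  have J0: "J 0 = 0" using hom[of 0 v] a by simp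
  have Jm: "\<And>w. J (- w) = J w" using hom[of "-1"] by simp
  have "J v + ereal (p (0 - v)) \<le> J 0" by (rule sub)
  hence le1: "a \<le> p v" using a J0 by (simp add: blinfun.diff_right blinfun.minus_right)
  have "J v + ereal (p (2 *\<^sub>R v - v)) \<le> J (2 *\<^sub>R v)" by (rule sub)
  hence "a + p v \<le> 2 * a" using a hom[of 2 v] by (simp add: blinfun.diff_right blinfun.scaleR_right)
  hence pv: "p v = a" using le1 by simp
  have D1: "\<And>x. bregman J p x v \<ge> 0"
  proof -
    fix x
    have "ereal a + ereal (p (x - v)) \<le> J x" using sub[of x] a by simp
    thus "bregman J p x v \<ge> 0" unfolding bregman_def a
      by (cases "J x") auto
  qed
  have D2: "\<And>z. bregman J (- p) z (- v) \<ge> 0"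
  proof -
    fix z
    have "J v + ereal (p (- z - v)) \<le> J (- z)" by (rule sub)
    hence "ereal (- p z) \<le> J z" using a pv Jm[of z]
      by (simp add: blinfun.diff_right blinfun.minus_right)
    thus "bregman J (- p) z (- v) \<ge> 0" unfolding bregman_def a Jm[of v] a
      by (cases "J z") (auto simp: blinfun.add_right uminus_blinfun.rep_eq pv)
  qed
  have z0: "bregman J (- p) 0 (- v) = 0"
    unfolding bregman_def using J0 Jm[of v] a pv by (simp add: uminus_blinfun.rep_eq)
  have "inf_conv (\<lambda>x. bregman J p x v) (\<lambda>x. bregman J (- p) x (- v)) u = 0"
    unfolding inf_conv_def
  proof (rule antisym)
    show "(INF z. bregman J p (u - z) v + bregman J (- p) z (- v)) \<le> 0"
      by (rule INF_lower2[of 0]) (auto simp: u0 z0)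
    show "0 \<le> (INF z. bregman J p (u - z) v + bregman J (- p) z (- v))"
      by (rule INF_greatest) (simp add: D1 D2 add_nonneg_nonneg)
  qed
  thus "u \<in> {u. inf_conv (\<lambda>x. bregman J p x v) (\<lambda>x. bregman J (- p) x (- v)) u = 0}" by simp
qed

end
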